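(* For every $n\ge 3$, the power graph $P(G(n))$ of the gyrogroup $G(n)$ (defined in the context) is not Hamiltonian.
   Context: Let $n\ge 3$ be an integer and $m=2^{n-1}$. Let $P(n)=\{0,1,\dots,m-1\}$, $H(n)=\{m,m+1,\dots,2^n-1\}$ and $G(n)=P(n)\cup H(n)$. For $i,j\in G(n)$ let $t,s,k\in P(n)$ be the residues modulo $m$ (taken in $\{0,\dots,m-1\}$) of $i+j$, $i+(\frac m2-1)j$ and $(\frac m2+1)i+(\frac m2-1)j$, respectively, and define $i\oplus j=t$ if $i,j\in P(n)$; $i\oplus j=t+m$ if $i\in P(n),j\in H(n)$; $i\oplus j=s+m$ if $i\in H(n),j\in P(n)$; $i\oplus j=k$ if $i,j\in H(n)$. Then $(G(n),\oplus)$ is a gyrogroup with identity $e=0$. Powers are defined by $a^1=a$, $a^{k+1}=a^k\oplus a$. The power graph $P(G(n))$ is the simple undirected graph with vertex set $G(n)$ in which distinct vertices $u,v$ are adjacent if and only if $u^k=v$ or $v^k=u$ for some positive integer $k$. A graph is Hamiltonian if it has a cycle passing through every vertex. *)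

theory Defs
  imports Main
begin

definition gm :: "nat \<Rightarrow> nat" where "gm n = 2 ^ (n - 1)"

definition PP :: "nat \<Rightarrow> nat set" where "PP n = {0..<gm n}"
definition HH :: "nat \<Rightarrow> nat set" where "HH n = {gm n..<2 ^ n}"
definition GG :: "nat \<Rightarrow> nat set" where "GG n = PP n \<union> HH n"

definition gop :: "nat \<Rightarrow> nat \<Rightarrow> nat \<Rightarrow> nat" where
  "gop n i j =
    (let m = gm n;
         t = (i + j) mod m;
         s = (i + (m div 2 - 1) * j) mod m;
         k = ((m div 2 + 1) * i + (m div 2 - 1) * j) mod m
     in if i \<in> PP n \<and> j \<in> PP n then t
        else if i \<in> PP n \<and> j \<in> HH n then t + m
        else if i \<in> HH n \<and> j \<in> PP n then s + m
        else k)"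

fun gpow :: "nat \<Rightarrow> nat \<Rightarrow> nat \<Rightarrow> nat" where
  "gpow n a 0 = 0"
| "gpow n a (Suc 0) = a"
| "gpow n a (Suc (Suc k)) = gop n (gpow n a (Suc k)) a"

definition pg_adj :: "nat \<Rightarrow> nat \<Rightarrow> nat \<Rightarrow> bool" where
  "pg_adj n u v \<longleftrightarrow> u \<in> GG n \<and> v \<in> GG n \<and> u \<noteq> v \<and>
     (\<exists>k>0. gpow n u k = v \<or> gpow n v k = u)"

definition hamiltonian :: "'a set \<Rightarrow> ('a \<Rightarrow> 'a \<Rightarrow> bool) \<Rightarrow> bool" where
  "hamiltonian V E \<longleftrightarrow> (\<exists>vs. distinct vs \<and> set vs = V \<and> length vs \<ge> 3 \<and>
     (\<forall>i. Suc i < length vs \<longrightarrow> E (vs ! i) (vs ! Suc i)) \<and>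
     E (last vs) (hd vs))"

end

theory Submission
  imports Defs
begin

lemma gm_ge: "n \<ge> 3 \<Longrightarrow> gm n \<ge> 4"
proof -
  assume "n \<ge> 3"
  then have "(2::nat)^2 \<le> 2^(n-1)" by (intro power_increasing) auto
  then show ?thesis by (simp add: gm_def)
qed

lemma two_pow: "n \<ge> 3 \<Longrightarrow> (2::nat)^n = 2 * gm n"
  unfolding gm_def by (cases n) auto

lemma gm_even: "n \<ge> 3 \<Longrightarrow> gm n = 2 * (gm n div 2)"
  unfolding gm_def by (cases n) auto

lemma H_sq: assumes "n \<ge> 3" "a \<in> HH n" shows "gop n a a = 0"
proof -
  let ?m = "gm n"
  have m4: "?m \<ge> 4" using gm_ge assms(1) .
  have ev: "?m = 2 * (?m div 2)" using gm_even assms(1) .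
  have np: "a \<notin> PP n" using assms(2) by (auto simp: PP_def HH_def)
  have "(?m div 2 + 1) * a + (?m div 2 - 1) * a = (?m div 2 + 1 + (?m div 2 - 1)) * a"
    by (simp add: add_mult_distrib)
  also have "?m div 2 + 1 + (?m div 2 - 1) = ?m" using m4 ev by linarith
  finally have "((?m div 2 + 1) * a + (?m div 2 - 1) * a) mod ?m = 0" by simp
  then show ?thesis using np unfolding gop_def Let_def by simp
qed

lemma H_zero: assumes "n \<ge> 3" "a \<in> HH n" shows "gop n 0 a = a"
proof -
  let ?m = "gm n"
  have m4: "?m \<ge> 4" using gm_ge assms(1) .
  have b: "?m \<le> a" "a < 2 * ?m" using assms two_pow[OF assms(1)] by (auto simp: HH_def)
  have "a mod ?m = a - ?m" using b by (simp add: le_mod_geq)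
  moreover have "0 \<in> PP n" using m4 by (simp add: PP_def)
  moreover have "a \<notin> PP n" using b by (simp add: PP_def)
  ultimately show ?thesis using assms(2) b unfolding gop_def Let_def by simp
qed

lemma H_pow: "n \<ge> 3 \<Longrightarrow> a \<in> HH n \<Longrightarrow> gpow n a k \<in> {0, a}"
  by (induction n a k rule: gpow.induct) (auto simp: H_sq H_zero)

lemma P_pow: "v \<in> PP n \<Longrightarrow> gpow n v k \<in> PP n"
  by (induction n v k rule: gpow.induct) (auto simp: PP_def gop_def Let_def gm_def)

lemma adjH: assumes "n \<ge> 3" "a \<in> HH n" "pg_adj n a v" shows "v = 0"
proof -
  obtain k where k: "gpow n a k = v \<or> gpow n v k = a" and v: "v \<in> GG n" "a \<noteq> v"
    using assms(3) unfolding pg_adj_def by blast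
  show ?thesis
  proof (cases "gpow n a k = v")
    case True then show ?thesis using H_pow[OF assms(1,2), of k] v by auto
  next
    case False
    then have e: "gpow n v k = a" using k by blast
    show ?thesis
    proof (cases "v \<in> PP n")
      case True then show ?thesis using P_pow[OF True, of k] e assms(2)
        by (auto simp: PP_def HH_def)
    next
      case False then have "v \<in> HH n" using v by (auto simp: GG_def)
      then show ?thesis using H_pow[OF assms(1), of v k] e v assms(2) by (auto simp: HH_def gm_def)
    qed
  qed
qed

theorem mainTheorem2:
  fixes n :: nat
  assumes "n \<ge> 3"
  shows "\<not> hamiltonian (GG n) (pg_adj n)"
proof
  assume "hamiltonian (GG n) (pg_adj n)"
  then obtain vs where d: "distinct vs" and sv: "set vs = GG n" and L: "length vs \<ge> 3"
    and st: "\<forall>i. Suc i < length vs \<longrightarrow> pg_adj n (vs ! i) (vs ! Suc i)"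
    and lh: "pg_adj n (last vs) (hd vs)"
    unfolding hamiltonian_def by blast
  let ?L = "length vs"
  have succ: "pg_adj n (vs ! i) (vs ! (Suc i mod ?L))" if "i < ?L" for i
  proof (cases "Suc i < ?L")
    case True then show ?thesis using st by simp
  next
    case False
    then have "Suc i = ?L" using that by simp
    moreover have "vs \<noteq> []" using L by auto
    ultimately have "i = ?L - 1" "Suc i mod ?L = 0" by auto
    moreover have "vs \<noteq> []" using L by auto
    ultimately have "vs ! i = last vs" "vs ! (Suc i mod ?L) = hd vs"
      by (auto simp add: last_conv_nth hd_conv_nth)
    then show ?thesis using lh by simp
  qed
  have m4: "gm n \<ge> 4" using gm_ge assms .
  have H1: "gm n \<in> HH n" "gm n + 1 \<in> HH n" using m4 two_pow[OF assms] by (auto simp: HH_def)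
  then have "gm n \<in> set vs" "gm n + 1 \<in> set vs" using sv by (auto simp: GG_def)
  then obtain i j where ij: "i < ?L" "vs ! i = gm n" "j < ?L" "vs ! j = gm n + 1"
    by (metis in_set_conv_nth)
  have "vs ! (Suc i mod ?L) = 0" using adjH[OF assms H1(1)] succ[OF ij(1)] ij(2) by simp
  moreover have "vs ! (Suc j mod ?L) = 0" using adjH[OF assms H1(2)] succ[OF ij(3)] ij(4) by simp
  moreover have "Suc i mod ?L < ?L" using L by (intro mod_less_divisor) linarith
  moreover have "Suc j mod ?L < ?L" using L by (intro mod_less_divisor) linarith
  ultimately have "Suc i mod ?L = Suc j mod ?L"
    using nth_eq_iff_index_eq[OF d, of "Suc i mod ?L" "Suc j mod ?L"] by metis
  moreover have "Suc i mod ?L = (if Suc i = ?L then 0 else Suc i)" using ij(1) by auto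
  moreover have "Suc j mod ?L = (if Suc j = ?L then 0 else Suc j)" using ij(3) by auto
  ultimately have "i = j" by (auto split: if_splits)
  then show False using ij by simp
qed

end
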